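(* Let $a,b\in\mathbb{C}$ with $(a,b)\neq(1,0)$ and $\alpha,\beta,\eta\in\mathbb{C}$ with $\alpha\neq0$. A nontrivial extension $0\to M_{\alpha,\beta}\to E\to\mathbb{C}c_\eta\to0$ of $\mathcal{W}(a,b)$-modules exists if and only if $\beta+\eta=0$ and $\alpha=1$. In this case $\dim\mathrm{Ext}(\mathbb{C}c_{-\beta},M_{1,\beta})=1$, and every nontrivial extension is equivalent to $E=\mathbb{C}[\partial]v\oplus\mathbb{C}c_\eta$ with $$L_\lambda c_\eta=kv,\qquad W_\lambda c_\eta=0,\qquad \partial c_\eta=\eta c_\eta+kv$$ for some nonzero $k\in\mathbb{C}$.
   Context: A conformal module over a Lie conformal algebra $\mathcal{R}$ is a $\mathbb{C}[\partial]$-module $V$ with $\mathbb{C}$-linear maps $\mathcal{R}\otimes V\to V[\lambda]$, $a\otimes v\mapsto a_\lambda v$, such that $(\partial a)_\lambda v=-\lambda a_\lambda v$, $a_\lambda(\partial v)=(\partial+\lambda)a_\lambda v$, and $a_\lambda(b_\mu v)-b_\mu(a_\lambda v)=[a_\lambda b]_{\lambda+\mu}v$. The Lie conformal algebra $\mathcal{W}(a,b)$ is the free $\mathbb{C}[\partial]$-module on $L,W$ with $[L_\lambda L]=(\partial+2\lambda)L$, $[L_\lambda W]=(\partial+a\lambda+b)W$, $[W_\lambda W]=0$. For $(a,b)\neq(1,0)$, $\alpha\neq0$, $M_{\alpha,\beta}=\mathbb{C}[\partial]v$ with $L_\lambda v=(\partial+\alpha\lambda+\beta)v$, $W_\lambda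 v=0$. $\mathbb{C}c_\eta$ is the one-dimensional module with $\partial c_\eta=\eta c_\eta$ and all $\lambda$-actions zero. An extension is an exact sequence of modules $0\to V\to E\to W\to 0$; equivalence means a module homomorphism between the middle terms compatible with the identities on $V$ and $W$; trivial means equivalent to the direct sum extension. $\mathrm{Ext}(W,V)$ denotes the vector space of equivalence classes of extensions of $W$ by $V$ (cocycles modulo coboundaries). *)

theory Defs
  imports "HOL-Computational_Algebra.Polynomial" "HOL-Library.Product_Plus"
begin

text \<open>A conformal module over W(a,b) on a carrier type: complex scalar multiplication,
  the action of the derivation d (the C[d]-module structure), and the lambda-actions
  of the two free generators L and W (lambda-action as a function of lambda).\<close>

record 'v cmod =
  scl  :: "complex \<Rightarrow> 'v \<Rightarrow> 'v"
  dd   :: "'v \<Rightarrow> 'v"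
  actL :: "complex \<Rightarrow> 'v \<Rightarrow> 'v"
  actW :: "complex \<Rightarrow> 'v \<Rightarrow> 'v"

definition lin :: "(complex \<Rightarrow> 'v::ab_group_add \<Rightarrow> 'v) \<Rightarrow> (complex \<Rightarrow> 'w::ab_group_add \<Rightarrow> 'w)
                   \<Rightarrow> ('v \<Rightarrow> 'w) \<Rightarrow> bool" where
  "lin s1 s2 f \<longleftrightarrow> (\<forall>x y. f (x + y) = f x + f y) \<and> (\<forall>c x. f (s1 c x) = s2 c (f x))"

definition is_polyfun :: "(complex \<Rightarrow> 'v::ab_group_add \<Rightarrow> 'v) \<Rightarrow> (complex \<Rightarrow> 'v) \<Rightarrow> bool" where
  "is_polyfun s f \<longleftrightarrow> (\<exists>n c. \<forall>l. f l = (\<Sum>i\<le>n. s (l ^ i) (c i)))"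

text \<open>Conformal module over W(a,b): [L_l L] = (d+2l)L, [L_l W] = (d+al+b)W, [W_l W] = 0,
  with (d x)_l v = -l x_l v used to evaluate the brackets at l+m.\<close>
definition is_Wmod :: "complex \<Rightarrow> complex \<Rightarrow> ('v::ab_group_add) cmod \<Rightarrow> bool" where
  "is_Wmod a b M \<longleftrightarrow>
     vector_space (scl M) \<and>
     lin (scl M) (scl M) (dd M) \<and>
     (\<forall>l. lin (scl M) (scl M) (actL M l)) \<and>
     (\<forall>l. lin (scl M) (scl M) (actW M l)) \<and>
     (\<forall>v. is_polyfun (scl M) (\<lambda>l. actL M l v)) \<and>
     (\<forall>v. is_polyfun (scl M) (\<lambda>l. actW M l v)) \<and>
     (\<forall>l v. actL M l (dd M v) = dd M (actL M l v) + scl M l (actL M l v)) \<and>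
     (\<forall>l v. actW M l (dd M v) = dd M (actW M l v) + scl M l (actW M l v)) \<and>
     (\<forall>l m v. actL M l (actL M m v) - actL M m (actL M l v)
               = scl M (l - m) (actL M (l + m) v)) \<and>
     (\<forall>l m v. actL M l (actW M m v) - actW M m (actL M l v)
               = scl M (- (l + m) + a * l + b) (actW M (l + m) v)) \<and>
     (\<forall>l m v. actW M l (actW M m v) - actW M m (actW M l v) = 0)"

definition is_hom :: "('v::ab_group_add) cmod \<Rightarrow> ('w::ab_group_add) cmod \<Rightarrow> ('v \<Rightarrow> 'w) \<Rightarrow> bool" where
  "is_hom M N f \<longleftrightarrow> lin (scl M) (scl N) f \<and>
     (\<forall>v. f (dd M v) = dd N (f v)) \<and>
     (\<forall>l v. f (actL M l v) = actL N l (f v)) \<and>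
     (\<forall>l v. f (actW M l v) = actW N l (f v))"

definition is_ext :: "complex \<Rightarrow> complex \<Rightarrow> ('v::ab_group_add) cmod \<Rightarrow> ('w::ab_group_add) cmod
     \<Rightarrow> ('e::ab_group_add) cmod \<Rightarrow> ('v \<Rightarrow> 'e) \<Rightarrow> ('e \<Rightarrow> 'w) \<Rightarrow> bool" where
  "is_ext a b V W E i p \<longleftrightarrow> is_Wmod a b V \<and> is_Wmod a b W \<and> is_Wmod a b E \<and>
     is_hom V E i \<and> is_hom E W p \<and> inj i \<and> surj p \<and> range i = {x. p x = 0}"

definition ext_equiv :: "('e::ab_group_add) cmod \<Rightarrow> ('v \<Rightarrow> 'e) \<Rightarrow> ('e \<Rightarrow> 'w)
     \<Rightarrow> ('f::ab_group_add) cmod \<Rightarrow> ('v \<Rightarrow> 'f) \<Rightarrow> ('f \<Rightarrow> 'w) \<Rightarrow> bool" where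
  "ext_equiv E i p E' i' p' \<longleftrightarrow> (\<exists>\<phi>. is_hom E E' \<phi> \<and> \<phi> \<circ> i = i' \<and> p' \<circ> \<phi> = p)"

definition dsum :: "('v::ab_group_add) cmod \<Rightarrow> ('w::ab_group_add) cmod \<Rightarrow> ('v \<times> 'w) cmod" where
  "dsum V W = \<lparr> scl = (\<lambda>c (x, y). (scl V c x, scl W c y)),
                dd = (\<lambda>(x, y). (dd V x, dd W y)),
                actL = (\<lambda>l (x, y). (actL V l x, actL W l y)),
                actW = (\<lambda>l (x, y). (actW V l x, actW W l y)) \<rparr>"

definition trivial_ext :: "('v::ab_group_add) cmod \<Rightarrow> ('w::ab_group_add) cmod
     \<Rightarrow> ('e::ab_group_add) cmod \<Rightarrow> ('v \<Rightarrow> 'e) \<Rightarrow> ('e \<Rightarrow> 'w) \<Rightarrow> bool" where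
  "trivial_ext V W E i p \<longleftrightarrow> ext_equiv E i p (dsum V W) (\<lambda>v. (v, 0)) snd"

definition nontrivial_ext :: "complex \<Rightarrow> complex \<Rightarrow> ('v::ab_group_add) cmod \<Rightarrow> ('w::ab_group_add) cmod
     \<Rightarrow> ('e::ab_group_add) cmod \<Rightarrow> ('v \<Rightarrow> 'e) \<Rightarrow> ('e \<Rightarrow> 'w) \<Rightarrow> bool" where
  "nontrivial_ext a b V W E i p \<longleftrightarrow> is_ext a b V W E i p \<and> \<not> trivial_ext V W E i p"

text \<open>M_{alpha,beta} = C[d]v, modelled as complex polynomials (p stands for p(d)v):
  L_l (p(d) v) = p(d+l) (d + alpha l + beta) v, W_l = 0.\<close>
definition Mact :: "complex \<Rightarrow> complex \<Rightarrow> complex \<Rightarrow> complex poly \<Rightarrow> complex poly" where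
  "Mact \<alpha> \<beta> l p = pcompose p [:l, 1:] * [:\<alpha> * l + \<beta>, 1:]"

definition Mab :: "complex \<Rightarrow> complex \<Rightarrow> complex poly cmod" where
  "Mab \<alpha> \<beta> = \<lparr> scl = smult, dd = (\<lambda>p. p * [:0, 1:]), actL = Mact \<alpha> \<beta>, actW = (\<lambda>l p. 0) \<rparr>"

text \<open>The one-dimensional module C c_eta (c_eta modelled as 1 :: complex).\<close>
definition Cc :: "complex \<Rightarrow> complex cmod" where
  "Cc \<eta> = \<lparr> scl = (*), dd = (\<lambda>z. \<eta> * z), actL = (\<lambda>l z. 0), actW = (\<lambda>l z. 0) \<rparr>"

text \<open>Extensions of C c_eta by M_{alpha,beta} on the vector space C[d]v (+) C c_eta given by
  cocycle data t = (f, g, h): d c = eta c + f(d) v, L_l c = g_l(d) v, W_l c = h_l(d) v.\<close>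
type_synonym cocyc = "complex poly \<times> (complex \<Rightarrow> complex poly) \<times> (complex \<Rightarrow> complex poly)"

definition Ecoc :: "complex \<Rightarrow> complex \<Rightarrow> complex \<Rightarrow> cocyc \<Rightarrow> (complex poly \<times> complex) cmod" where
  "Ecoc \<alpha> \<beta> \<eta> t = (case t of (f, g, h) \<Rightarrow>
     \<lparr> scl = (\<lambda>c (x, z). (smult c x, c * z)),
       dd = (\<lambda>(x, z). (x * [:0, 1:] + smult z f, \<eta> * z)),
       actL = (\<lambda>l (x, z). (Mact \<alpha> \<beta> l x + smult z (g l), 0)),
       actW = (\<lambda>l (x, z). (smult z (h l), 0)) \<rparr>)"

definition incl :: "complex poly \<Rightarrow> complex poly \<times> complex" where
  "incl x = (x, 0)"

text \<open>Ext(C c_eta, M_{alpha,beta}) = cocycles modulo coboundaries.\<close>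
definition cocycles :: "complex \<Rightarrow> complex \<Rightarrow> complex \<Rightarrow> complex \<Rightarrow> complex \<Rightarrow> cocyc set" where
  "cocycles a b \<alpha> \<beta> \<eta> = {t. is_ext a b (Mab \<alpha> \<beta>) (Cc \<eta>) (Ecoc \<alpha> \<beta> \<eta> t) incl snd}"

definition coboundaries :: "complex \<Rightarrow> complex \<Rightarrow> complex \<Rightarrow> complex \<Rightarrow> complex \<Rightarrow> cocyc set" where
  "coboundaries a b \<alpha> \<beta> \<eta> = {t \<in> cocycles a b \<alpha> \<beta> \<eta>.
      trivial_ext (Mab \<alpha> \<beta>) (Cc \<eta>) (Ecoc \<alpha> \<beta> \<eta> t) incl snd}"

definition cadd :: "cocyc \<Rightarrow> cocyc \<Rightarrow> cocyc" where
  "cadd t u = (case t of (f, g, h) \<Rightarrow> case u of (f', g', h') \<Rightarrow>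
                (f + f', (\<lambda>l. g l + g' l), (\<lambda>l. h l + h' l)))"

definition cscale :: "complex \<Rightarrow> cocyc \<Rightarrow> cocyc" where
  "cscale c t = (case t of (f, g, h) \<Rightarrow> (smult c f, (\<lambda>l. smult c (g l)), (\<lambda>l. smult c (h l))))"

definition csubspace :: "cocyc set \<Rightarrow> bool" where
  "csubspace S \<longleftrightarrow> (0, (\<lambda>l. 0), (\<lambda>l. 0)) \<in> S \<and> (\<forall>t\<in>S. \<forall>u\<in>S. cadd t u \<in> S) \<and>
                   (\<forall>c. \<forall>t\<in>S. cscale c t \<in> S)"

text \<open>dim (Z / B) = 1 for subspaces B \<subseteq> Z.\<close>
definition quot_dim_one :: "cocyc set \<Rightarrow> cocyc set \<Rightarrow> bool" where
  "quot_dim_one Z B \<longleftrightarrow> csubspace Z \<and> csubspace B \<and> B \<subseteq> Z \<and>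
     (\<exists>z\<in>Z. z \<notin> B \<and> (\<forall>x\<in>Z. \<exists>c. cadd x (cscale (- c) z) \<in> B))"

definition Ek :: "complex \<Rightarrow> complex \<Rightarrow> complex \<Rightarrow> complex \<Rightarrow> (complex poly \<times> complex) cmod" where
  "Ek \<alpha> \<beta> \<eta> k = Ecoc \<alpha> \<beta> \<eta> ([:k:], (\<lambda>l. [:k:]), (\<lambda>l. 0))"

end

theory Submission
  imports Defs
begin


lemma smult_conv_const: "smult c p = [:c:] * p" by simp
lemma pc_lin: "[:a, 1:] = [:a:] + monom 1 1" by (simp add: monom_Suc monom_0)
lemma pc_X: "[:0, 1:] = monom 1 1" by (simp add: monom_Suc monom_0)
lemma const_add: "[:a + b:] = [:a:] + [:b:]" by simp
lemma const_mult: "[:a * b:] = [:a:] * [:b:]" by (simp add: mult.commute)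
lemma const_minus: "[:- a:] = - [:a:]" by simp
lemma const_diff: "[:a - b:] = [:a:] - [:b:]" by simp
lemma const_zero: "[:0:] = 0" by simp
lemma pc_lin_comp: "pcompose [:c,1:] [:l,1:] = [:c + l, 1::complex:]" by (simp add: pcompose_pCons)
lemma pc_lin_gen: "[:0,1::complex:] = X \<Longrightarrow> [:a,1:] = [:a:] + X" by (erule subst) simp
lemma pc_lin_gen2: "[:0,1::complex:] = X \<Longrightarrow> pCons a 1 = [:a:] + X" by (erule subst) (simp add: one_pCons)
lemma const_one: "[:1:] = 1" by simp
lemmas ring_conv = smult_conv_const const_zero const_one const_add const_mult const_minus const_diff

lemma cancel0: fixes h q :: "'a::idom" shows "h * q = 0 \<Longrightarrow> q \<noteq> 0 \<Longrightarrow> h = 0" by simp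
lemma rcancel: fixes a b q :: "'a::idom" shows "a * q = b * q \<Longrightarrow> q \<noteq> 0 \<Longrightarrow> a = b" by simp

lemma Mact_add: "Mact \<alpha> \<beta> l (x + y) = Mact \<alpha> \<beta> l x + Mact \<alpha> \<beta> l y"
  by (simp add: Mact_def pcompose_add algebra_simps)
lemma Mact_smult: "Mact \<alpha> \<beta> l (smult c x) = smult c (Mact \<alpha> \<beta> l x)"
  by (simp only: Mact_def pcompose_smult mult_smult_left)
lemma Mact_0[simp]: "Mact \<alpha> \<beta> l 0 = 0"
  by (simp add: Mact_def)

locale ectx =
  fixes a b \<alpha> \<beta> \<eta> :: complex and E :: "('e::ab_group_add) cmod"
    and i :: "complex poly \<Rightarrow> 'e" and p :: "'e \<Rightarrow> complex" and c0 :: 'e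
  assumes ext: "is_ext a b (Mab \<alpha> \<beta>) (Cc \<eta>) E i p" and c0: "p c0 = 1"
begin

lemma WE: "is_Wmod a b E" using ext by (simp add: is_ext_def)
lemma vsE: "vector_space (scl E)" using WE by (simp add: is_Wmod_def)

sublocale V: vector_space "scl E" by (rule vsE)

lemma i_add: "i (x + y) = i x + i y"
  and i_smult: "i (smult c x) = scl E c (i x)"
  and i_dd: "dd E (i x) = i (x * [:0,1:])"
  and i_L: "actL E l (i x) = i (Mact \<alpha> \<beta> l x)"
  and i_W: "actW E l (i x) = i 0"
  using ext by (auto simp: is_ext_def is_hom_def lin_def Mab_def)

lemma p_add: "p (x + y) = p x + p y"
  and p_scl: "p (scl E c e) = c * p e"
  and p_dd: "p (dd E e) = \<eta> * p e"
  and p_L: "p (actL E l e) = 0"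
  and p_W: "p (actW E l e) = 0"
  using ext by (auto simp: is_ext_def is_hom_def lin_def Cc_def)

lemma inj_i: "inj i" and ker: "range i = {x. p x = 0}"
  using ext by (auto simp: is_ext_def)

sublocale IA: additive i by standard (rule i_add)
sublocale PA: additive p by standard (rule p_add)

lemma p_i: "p (i x) = 0" using ker by auto

lemma dd_add: "dd E (x + y) = dd E x + dd E y"
  and dd_scl: "dd E (scl E c x) = scl E c (dd E x)"
  and L_add: "actL E l (x + y) = actL E l x + actL E l y"
  and L_scl: "actL E l (scl E c x) = scl E c (actL E l x)"
  and W_add: "actW E l (x + y) = actW E l x + actW E l y"
  and W_scl: "actW E l (scl E c x) = scl E c (actW E l x)"
  and E1ax: "actL E l (dd E v) = dd E (actL E l v) + scl E l (actL E l v)"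
  and E2ax: "actW E l (dd E v) = dd E (actW E l v) + scl E l (actW E l v)"
  using WE unfolding is_Wmod_def lin_def by auto

definition N :: "complex poly \<Rightarrow> complex \<Rightarrow> 'e" where
  "N x s = i x + scl E s c0"

definition ff where "ff = inv i (dd E c0 - scl E \<eta> c0)"
definition gg where "gg l = inv i (actL E l c0)"
definition hh where "hh l = inv i (actW E l c0)"
definition pr where "pr e = inv i (e - scl E (p e) c0)"

lemma in_range: "p e = 0 \<Longrightarrow> i (inv i e) = e"
  using ker by (metis (mono_tags, lifting) f_inv_into_f mem_Collect_eq)

lemma i_ff: "i ff = dd E c0 - scl E \<eta> c0"
  unfolding ff_def by (rule in_range) (simp add: PA.diff p_dd p_scl c0)
lemma i_gg: "i (gg l) = actL E l c0"
  unfolding gg_def by (rule in_range) (simp add: p_L)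
lemma i_hh: "i (hh l) = actW E l c0"
  unfolding hh_def by (rule in_range) (simp add: p_W)
lemma i_pr: "i (pr e) = e - scl E (p e) c0"
  unfolding pr_def by (rule in_range) (simp add: PA.diff p_scl c0)

lemma N_surj: "e = N (pr e) (p e)"
  by (simp add: N_def i_pr)
lemma p_N[simp]: "p (N x s) = s"
  by (simp add: N_def p_add p_i p_scl c0)
lemma N_inj: "N x s = N y t \<longleftrightarrow> x = y \<and> s = t"
proof
  assume h: "N x s = N y t"
  then have st: "s = t" using p_N[of x s] p_N[of y t] by simp
  from h have "i x + scl E s c0 = i y + scl E t c0" by (simp only: N_def)
  with st have "i x = i y" by simp
  then have "x = y" by (rule injD[OF inj_i])
  with st show "x = y \<and> s = t" by (rule conjI[rotated])
qed simp
lemma i_N: "i x = N x 0" by (simp add: N_def)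
lemma zero_N: "0 = N 0 0" by (simp add: N_def IA.zero)
lemma pr_N[simp]: "pr (N x s) = x"
proof -
  have "N (pr (N x s)) (p (N x s)) = N x s" by (rule N_surj[symmetric])
  then have "N (pr (N x s)) s = N x s" by (simp only: p_N)
  then show ?thesis unfolding N_inj by (rule conjunct1)
qed
lemma N_add: "N x s + N y t = N (x + y) (s + t)"
  by (simp add: N_def i_add V.scale_left_distrib algebra_simps)
lemma N_scl: "scl E c (N x s) = N (smult c x) (c * s)"
  by (simp add: N_def i_smult V.scale_right_distrib)
lemma N_minus: "- N x s = N (- x) (- s)"
  by (simp add: N_def IA.minus)
lemma N_diff: "N x s - N y t = N (x - y) (s - t)"
  by (simp add: N_def IA.diff algebra_simps V.scale_left_diff_distrib)

lemma dd_c0: "dd E c0 = N ff \<eta>"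
  by (simp add: N_def i_ff)
lemma dd_c0': "dd E c0 = i ff + scl E \<eta> c0"
  by (simp add: i_ff)
lemma N_dd: "dd E (N x s) = N (x * [:0,1:] + smult s ff) (\<eta> * s)"
  by (simp add: N_def dd_add dd_scl i_dd dd_c0' i_add i_smult V.scale_right_distrib mult.commute add.assoc)
lemma N_L: "actL E l (N x s) = N (Mact \<alpha> \<beta> l x + smult s (gg l)) 0"
  by (simp add: N_def L_add L_scl i_L i_gg[symmetric] i_add i_smult)
lemma N_W: "actW E l (N x s) = N (smult s (hh l)) 0"
  by (simp add: N_def W_add W_scl i_W IA.zero i_hh[symmetric] i_smult)

lemma N_cases: assumes "\<And>x s. P (N x s)" shows "P e"
proof -
  have "P (N (pr e) (p e))" by (rule assms)
  then show ?thesis by (simp only: N_surj[symmetric])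
qed

lemma hh0: "hh l = 0"
proof -
  have 1: "actW E l (dd E c0) = N (smult \<eta> (hh l)) 0" by (simp add: dd_c0 N_W)
  have 2: "dd E (actW E l c0) + scl E l (actW E l c0) = N (hh l * [:0,1:] + smult l (hh l)) 0"
    by (simp add: i_hh[symmetric] i_N N_dd N_scl N_add)
  from E2ax[of l c0] 1 2 have H: "smult \<eta> (hh l) = hh l * [:0,1:] + smult l (hh l)"
    by (simp add: N_inj)
  have "hh l * [:l - \<eta>, 1:] = (hh l * [:0,1:] + smult l (hh l)) - smult \<eta> (hh l)"
    proof - obtain X where X: "[:0,1::complex:] = X" by blast show ?thesis unfolding ring_conv pc_lin_gen[OF X] pc_lin_gen2[OF X] by algebra qed
  also have "\<dots> = 0" unfolding H[symmetric] by simp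
  finally have "hh l * [:l - \<eta>, 1:] = 0" .
  moreover have "[:l - \<eta>, 1:] \<noteq> 0" by simp
  ultimately show ?thesis by (rule cancel0)
qed

lemma gg_rel: "pcompose ff [:l,1:] * [:\<alpha>*l+\<beta>,1:] = gg l * [:l - \<eta>, 1:]"
proof -
  have 1: "actL E l (dd E c0) = N (Mact \<alpha> \<beta> l ff + smult \<eta> (gg l)) 0" unfolding dd_c0 by (rule N_L)
  have 2: "dd E (actL E l c0) + scl E l (actL E l c0) = N (gg l * [:0,1:] + smult l (gg l)) 0"
    by (simp add: i_gg[symmetric] i_N N_dd N_scl N_add)
  from E1ax[of l c0] 1 2 have H: "Mact \<alpha> \<beta> l ff + smult \<eta> (gg l) = gg l * [:0,1:] + smult l (gg l)"
    by (simp add: N_inj)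
  have "gg l * [:l - \<eta>, 1:] = (gg l * [:0,1:] + smult l (gg l)) - smult \<eta> (gg l)"
    proof - obtain X where X: "[:0,1::complex:] = X" by blast show ?thesis unfolding ring_conv pc_lin_gen[OF X] pc_lin_gen2[OF X] by algebra qed
  also have "\<dots> = Mact \<alpha> \<beta> l ff" unfolding H[symmetric] by simp
  finally have F: "gg l * [:l - \<eta>, 1:] = Mact \<alpha> \<beta> l ff" .
  show ?thesis using F unfolding Mact_def by (rule sym)
qed

lemma feta: "poly ff \<eta> * (\<alpha>*l + \<beta> + \<eta> - l) = 0"
proof -
  have "poly (pcompose ff [:l,1:] * [:\<alpha>*l+\<beta>,1:]) (\<eta> - l) = poly (gg l * [:l - \<eta>, 1:]) (\<eta> - l)"
    by (simp only: gg_rel)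
  then show ?thesis by (simp add: poly_pcompose algebra_simps)
qed

lemma gg1: assumes "\<alpha> = 1" "\<eta> = - \<beta>" shows "gg l = pcompose ff [:l,1:]"
proof -
  have B: "[:\<alpha>*l+\<beta>,1:] = [:l - \<eta>,1:]" using assms by simp
  have "pcompose ff [:l,1:] * [:l - \<eta>,1:] = gg l * [:l - \<eta>, 1:]"
    using gg_rel[of l] unfolding B .
  moreover have "[:l - \<eta>, 1:] \<noteq> 0" by simp
  ultimately show ?thesis by (rule rcancel[symmetric])
qed

lemma triv_imp: assumes "trivial_ext (Mab \<alpha> \<beta>) (Cc \<eta>) E i p" shows "poly ff \<eta> = 0"
proof -
  obtain \<phi> where hom: "is_hom E (dsum (Mab \<alpha> \<beta>) (Cc \<eta>)) \<phi>" and c1: "\<phi> \<circ> i = (\<lambda>v. (v, 0))"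
      and c2: "snd \<circ> \<phi> = p"
    using assms unfolding trivial_ext_def ext_equiv_def by (elim exE conjE)
  obtain u s where us: "\<phi> c0 = (u, s)" by fastforce
  have s1: "s = 1" using c2 us c0 by (metis comp_apply snd_conv)
  have phadd: "\<phi> (x + y) = \<phi> x + \<phi> y" for x y using hom by (simp add: is_hom_def lin_def)
  have phscl: "\<phi> (scl E c x) = scl (dsum (Mab \<alpha> \<beta>) (Cc \<eta>)) c (\<phi> x)" for c x
    using hom by (simp add: is_hom_def lin_def)
  have phdd: "\<phi> (dd E x) = dd (dsum (Mab \<alpha> \<beta>) (Cc \<eta>)) (\<phi> x)" for x
    using hom by (simp add: is_hom_def)
  have phi: "\<phi> (i x) = (x, 0)" for x using c1 by (metis comp_apply)
  have "\<phi> (dd E c0) = (u * [:0,1:], \<eta>)"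
    by (simp add: phdd us s1 dsum_def Mab_def Cc_def)
  moreover have "\<phi> (dd E c0) = (ff + smult \<eta> u, \<eta>)"
    unfolding dd_c0' by (simp add: phadd phscl phi us s1 dsum_def Mab_def Cc_def)
  ultimately have "ff + smult \<eta> u = u * [:0,1:]" by (metis prod.inject)
  then have "ff = u * [:0,1:] - smult \<eta> u" by (metis add_diff_cancel_right')
  then show ?thesis by simp
qed

lemma triv_if: assumes "poly ff \<eta> = 0" shows "trivial_ext (Mab \<alpha> \<beta>) (Cc \<eta>) E i p"
proof -
  obtain u where u: "ff = [:-\<eta>,1:] * u" using assms poly_eq_0_iff_dvd by (metis dvdE)
  have gu: "gg l = Mact \<alpha> \<beta> l u" for l
  proof -
    have A: "gg l * [:l - \<eta>, 1:] = [:-\<eta> + l,1:] * pcompose u [:l,1:] * [:\<alpha>*l+\<beta>,1:]"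
      using gg_rel[of l] unfolding u pcompose_mult pc_lin_comp by (rule sym)
    have B: "[:-\<eta> + l,1:] * pcompose u [:l,1:] * [:\<alpha>*l+\<beta>,1:] = Mact \<alpha> \<beta> l u * [:l - \<eta>, 1:]"
      proof - obtain X where X: "[:0,1::complex:] = X" by blast show ?thesis unfolding Mact_def ring_conv pc_lin_gen[OF X] pc_lin_gen2[OF X] by algebra qed
    have "gg l * [:l - \<eta>, 1:] = Mact \<alpha> \<beta> l u * [:l - \<eta>, 1:]" using A B by (rule trans)
    moreover have "[:l - \<eta>, 1:] \<noteq> 0" by simp
    ultimately show ?thesis by (rule rcancel)
  qed
  define \<phi> where "\<phi> e = (pr e + smult (p e) u, p e)" for e
  have phN: "\<phi> (N x s) = (x + smult s u, s)" for x s by (simp add: \<phi>_def)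
  have hom: "is_hom E (dsum (Mab \<alpha> \<beta>) (Cc \<eta>)) \<phi>"
    unfolding is_hom_def lin_def
  proof (intro conjI allI)
    fix x y
    show "\<phi> (x + y) = \<phi> x + \<phi> y"
      by (induct x rule: N_cases, induct y rule: N_cases) (simp add: N_add phN algebra_simps smult_add_left)
  next
    fix c x
    show "\<phi> (scl E c x) = scl (dsum (Mab \<alpha> \<beta>) (Cc \<eta>)) c (\<phi> x)"
      by (induct x rule: N_cases) (simp add: N_scl phN dsum_def Mab_def Cc_def smult_add_right)
  next
    fix x
    show "\<phi> (dd E x) = dd (dsum (Mab \<alpha> \<beta>) (Cc \<eta>)) (\<phi> x)"
    proof (induct x rule: N_cases)
      case (1 x s)
      have "x * [:0, 1:] + smult s ff + smult (\<eta> * s) u = (x + smult s u) * [:0,1:]"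
        proof - obtain X where X: "[:0,1::complex:] = X" by blast show ?thesis unfolding u ring_conv pc_lin_gen[OF X] pc_lin_gen2[OF X] by algebra qed
      then show ?case by (simp add: N_dd phN dsum_def Mab_def Cc_def)
    qed
  next
    fix l x
    show "\<phi> (actL E l x) = actL (dsum (Mab \<alpha> \<beta>) (Cc \<eta>)) l (\<phi> x)"
      by (induct x rule: N_cases) (simp add: N_L phN dsum_def Mab_def Cc_def gu Mact_add Mact_smult)
  next
    fix l x
    show "\<phi> (actW E l x) = actW (dsum (Mab \<alpha> \<beta>) (Cc \<eta>)) l (\<phi> x)"
      by (induct x rule: N_cases) (simp add: N_W phN dsum_def Mab_def Cc_def hh0)
  qed
  have c1: "\<phi> \<circ> i = (\<lambda>v. (v, 0))" by (rule HOL.ext) (simp add: i_N phN)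
  have c2: "snd \<circ> \<phi> = p" by (rule HOL.ext) (simp add: \<phi>_def)
  show ?thesis unfolding trivial_ext_def ext_equiv_def by (intro exI[of _ \<phi>] conjI hom c1 c2)
qed

lemma equiv_Ek: assumes a1: "\<alpha> = 1" and eb: "\<eta> = - \<beta>"
  shows "ext_equiv (Ek \<alpha> \<beta> \<eta> (poly ff \<eta>)) incl snd E i p"
proof -
  define k where "k = poly ff \<eta>"
  have "poly (ff - [:k:]) \<eta> = 0" by (simp add: k_def)
  then obtain u where u: "ff - [:k:] = [:-\<eta>,1:] * u" using poly_eq_0_iff_dvd by (metis dvdE)
  have ffu: "ff = [:k:] + [:-\<eta>,1:] * u" using u by (simp add: algebra_simps)
  have gu: "gg l = [:k:] + [:-\<eta> + l,1:] * pcompose u [:l,1:]" for l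
    by (simp only: gg1[OF a1 eb] ffu pcompose_add pcompose_mult pc_lin_comp pcompose_const)
  define \<psi> where "\<psi> xz = N (fst xz - smult (snd xz) u) (snd xz)" for xz
  have psi: "\<psi> (x, z) = N (x - smult z u) z" for x z by (simp add: \<psi>_def)
  have hom: "is_hom (Ek \<alpha> \<beta> \<eta> k) E \<psi>"
    unfolding is_hom_def lin_def
  proof (intro conjI allI)
    fix x y :: "complex poly \<times> complex"
    show "\<psi> (x + y) = \<psi> x + \<psi> y"
      by (cases x, cases y) (simp add: psi N_add algebra_simps smult_add_left)
  next
    fix c and x :: "complex poly \<times> complex"
    show "\<psi> (scl (Ek \<alpha> \<beta> \<eta> k) c x) = scl E c (\<psi> x)"
      by (cases x) (simp add: psi N_scl Ek_def Ecoc_def smult_diff_right)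
  next
    fix x :: "complex poly \<times> complex"
    show "\<psi> (dd (Ek \<alpha> \<beta> \<eta> k) x) = dd E (\<psi> x)"
    proof (cases x)
      case (Pair x z)
      have "x * [:0, 1:] + smult z [:k:] - smult (\<eta> * z) u = (x - smult z u) * [:0, 1:] + smult z ff"
        proof - obtain X where X: "[:0,1::complex:] = X" by blast show ?thesis unfolding ffu ring_conv pc_lin_gen[OF X] pc_lin_gen2[OF X] by algebra qed
      then show ?thesis by (simp add: Pair psi N_dd Ek_def Ecoc_def)
    qed
  next
    fix l and x :: "complex poly \<times> complex"
    show "\<psi> (actL (Ek \<alpha> \<beta> \<eta> k) l x) = actL E l (\<psi> x)"
    proof (cases x)
      case (Pair x z)
      have "Mact \<alpha> \<beta> l x + smult z [:k:] = Mact \<alpha> \<beta> l (x - smult z u) + smult z (gg l)"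
        proof - obtain X where X: "[:0,1::complex:] = X" by blast show ?thesis unfolding gu Mact_def a1 eb pcompose_diff pcompose_smult unfolding ring_conv pc_lin_gen[OF X] pc_lin_gen2[OF X] by algebra qed
      then show ?thesis by (simp add: Pair psi N_L Ek_def Ecoc_def)
    qed
  next
    fix l and x :: "complex poly \<times> complex"
    show "\<psi> (actW (Ek \<alpha> \<beta> \<eta> k) l x) = actW E l (\<psi> x)"
      by (cases x) (simp add: psi N_W hh0 Ek_def Ecoc_def)
  qed
  have c1: "\<psi> \<circ> incl = i" by (rule HOL.ext) (simp add: incl_def psi i_N)
  have c2: "p \<circ> \<psi> = snd" by (rule HOL.ext) (simp add: \<psi>_def)
  show ?thesis unfolding ext_equiv_def k_def[symmetric] by (intro exI[of _ \<psi>] conjI hom c1 c2)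
qed

end


lemma smult_sum_right: "smult c (\<Sum>i\<in>S. f i) = (\<Sum>i\<in>S. smult c (f i))"
  by (induct S rule: infinite_finite_induct) (simp_all add: smult_add_right)

lemma pf_extend:
  assumes "m \<ge> n"
  shows "(\<Sum>i\<le>n. smult (l ^ i) (c i)) = (\<Sum>i\<le>m. smult (l ^ i) (if i \<le> n then c i else 0))"
proof -
  have "(\<Sum>i\<le>m. smult (l ^ i) (if i \<le> n then c i else 0)) = (\<Sum>i\<le>m. if i \<le> n then smult (l ^ i) (c i) else 0)"
    by (rule sum.cong) auto
  also have "\<dots> = (\<Sum>i\<in>{i\<in>{..m}. i \<le> n}. smult (l ^ i) (c i))"
    by (rule sum.inter_filter[symmetric]) simp
  also have "{i\<in>{..m}. i \<le> n} = {..n}" using assms by auto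
  finally show ?thesis by simp
qed

lemma pf_const: "is_polyfun smult (\<lambda>l. q)"
  unfolding is_polyfun_def by (rule exI[of _ 0], rule exI[of _ "\<lambda>i. q"]) simp

lemma pf_add:
  assumes "is_polyfun smult F" "is_polyfun smult G"
  shows "is_polyfun smult (\<lambda>l. F l + G l)"
proof -
  obtain n1 c1 where 1: "\<And>l. F l = (\<Sum>i\<le>n1. smult (l ^ i) (c1 i))" using assms(1) unfolding is_polyfun_def by blast
  obtain n2 c2 where 2: "\<And>l. G l = (\<Sum>i\<le>n2. smult (l ^ i) (c2 i))" using assms(2) unfolding is_polyfun_def by blast
  define c where "c i = (if i \<le> n1 then c1 i else 0) + (if i \<le> n2 then c2 i else 0)" for i
  have "F l + G l = (\<Sum>i\<le>n1+n2. smult (l ^ i) (c i))" for l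
    by (simp add: c_def smult_add_right sum.distrib pf_extend[of n1 "n1+n2" l c1] pf_extend[of n2 "n1+n2" l c2] 1 2)
  then show ?thesis unfolding is_polyfun_def by blast
qed

lemma pf_smult_l:
  assumes "is_polyfun smult F"
  shows "is_polyfun smult (\<lambda>l. smult l (F l))"
proof -
  obtain n c where 1: "\<And>l. F l = (\<Sum>i\<le>n. smult (l ^ i) (c i))" using assms unfolding is_polyfun_def by blast
  define c' where "c' i = (case i of 0 \<Rightarrow> 0 | Suc j \<Rightarrow> c j)" for i
  have "smult l (F l) = (\<Sum>i\<le>Suc n. smult (l ^ i) (c' i))" for l
    unfolding 1 sum.atMost_Suc_shift by (simp add: c'_def smult_sum_right)
  then show ?thesis unfolding is_polyfun_def by blast
qed

lemma pf_mult:
  assumes "is_polyfun smult F"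
  shows "is_polyfun smult (\<lambda>l. q * F l)"
proof -
  obtain n c where 1: "\<And>l. F l = (\<Sum>i\<le>n. smult (l ^ i) (c i))" using assms unfolding is_polyfun_def by blast
  have H: "q * F l = (\<Sum>i\<le>n. smult (l ^ i) (q * c i))" for l
    unfolding 1 by (simp add: sum_distrib_left mult_smult_right)
  show ?thesis unfolding is_polyfun_def
    by (rule exI[of _ n], rule exI[of _ "\<lambda>i. q * c i"]) (simp add: H)
qed

lemma pf_smultc:
  assumes "is_polyfun smult F"
  shows "is_polyfun smult (\<lambda>l. smult z (F l))"
  using pf_mult[OF assms, of "[:z:]"] by simp

lemma pf_pcomp: "is_polyfun smult (\<lambda>l. pcompose f [:l,1:])"
proof (induct f)
  case 0
  then show ?case using pf_const[of 0] by simp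
next
  case (pCons a p)
  have eq: "pcompose (pCons a p) [:l,1:] = [:a:] + ([:0,1:] * pcompose p [:l,1:] + smult l (pcompose p [:l,1:]))" for l
    by (simp add: pcompose_pCons)
  show ?case unfolding eq
    by (intro pf_add pf_const pf_mult pf_smult_l pCons(2))
qed

lemma pf_Mact: "is_polyfun smult (\<lambda>l. Mact 1 \<beta> l x)"
proof -
  have eq: "Mact 1 \<beta> l x = [:\<beta>,1:] * pcompose x [:l,1:] + smult l (pcompose x [:l,1:])" for l
    by (simp add: Mact_def algebra_simps smult_add_left)
  show ?thesis unfolding eq by (intro pf_add pf_mult pf_smult_l pf_pcomp)
qed

lemma pf_pair:
  assumes "is_polyfun smult F"
  shows "is_polyfun (\<lambda>c (x, z). (smult c x, c * z)) (\<lambda>l. (F l, 0::complex))"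
proof -
  obtain n c where 1: "\<And>l. F l = (\<Sum>i\<le>n. smult (l ^ i) (c i))" using assms unfolding is_polyfun_def by blast
  have "(F l, 0::complex) = (\<Sum>i\<le>n. (\<lambda>c (x, z). (smult c x, c * z)) (l ^ i) (c i, 0))" for l
    by (simp add: prod_eq_iff fst_sum snd_sum 1)
  then show ?thesis unfolding is_polyfun_def
    by (intro exI[of _ n] exI[of _ "\<lambda>i. (c i, 0)"] allI)
qed



lemma pcomp_X: "pcompose [:0,1:] (q::complex poly) = q" by (simp add: pcompose_pCons)

lemma vs_smult: "vector_space (smult :: complex \<Rightarrow> complex poly \<Rightarrow> complex poly)"
  by unfold_locales (simp_all add: smult_add_right smult_add_left)

lemma vs_C: "vector_space ((*) :: complex \<Rightarrow> complex \<Rightarrow> complex)"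
  by unfold_locales (simp_all add: algebra_simps)

lemma vs_pair: "vector_space ((\<lambda>c (x, z). (smult c x, c * z)) :: complex \<Rightarrow> complex poly \<times> complex \<Rightarrow> _)"
  by unfold_locales (auto simp: smult_add_right smult_add_left algebra_simps)

lemma MM: "Mact 1 \<beta> l (Mact 1 \<beta> m v) = pcompose v [:l+m,1:] * [:l + m + \<beta>,1:] * [:l + \<beta>,1:]"
  by (simp only: Mact_def pcompose_mult pcompose_assoc[symmetric] pc_lin_comp mult_1 add_ac)

lemma MG: "Mact 1 \<beta> l (pcompose f [:m,1:]) = pcompose f [:l+m,1:] * [:l + \<beta>,1:]"
  by (simp only: Mact_def pcompose_mult pcompose_assoc[symmetric] pc_lin_comp mult_1 add_ac)

lemma Mact_dd: "Mact 1 \<beta> l (v * [:0,1:]) = Mact 1 \<beta> l v * [:0,1:] + smult l (Mact 1 \<beta> l v)"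
proof -
  obtain X where X: "[:0,1::complex:] = X" by blast
  show ?thesis unfolding Mact_def pcompose_mult pcomp_X
    unfolding ring_conv pc_lin_gen[OF X] pc_lin_gen2[OF X] by algebra
qed

lemma Mact_dd2: "Mact 1 \<beta> l (pCons 0 v) = pCons 0 (Mact 1 \<beta> l v) + smult l (Mact 1 \<beta> l v)"
  using Mact_dd[of \<beta> l v] by simp

lemma Mact_br: "Mact 1 \<beta> l (Mact 1 \<beta> m v) - Mact 1 \<beta> m (Mact 1 \<beta> l v) = smult (l - m) (Mact 1 \<beta> (l + m) v)"
proof -
  obtain X where X: "[:0,1::complex:] = X" by blast
  show ?thesis unfolding MM MM[of \<beta> m l] add.commute[of m l]
    unfolding Mact_def ring_conv pc_lin_gen[OF X] pc_lin_gen2[OF X] by algebra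
qed

lemma Mab_W: "is_Wmod a b (Mab 1 \<beta>)"
  unfolding is_Wmod_def lin_def Mab_def
  by (simp add: vs_smult Mact_add Mact_smult pf_Mact pf_const algebra_simps Mact_dd2 Mact_br)

lemma Cc_W: "is_Wmod a b (Cc \<eta>)"
proof -
  have "\<exists>n c. \<forall>l. (\<Sum>i\<le>n. c i * l ^ i) = (0::complex)"
    by (rule exI[of _ 0], rule exI[of _ "\<lambda>_. 0"]) simp
  then show ?thesis by (simp add: is_Wmod_def lin_def Cc_def vs_C algebra_simps is_polyfun_def)
qed



lemma EL_dd: "Mact 1 \<beta> l (x * [:0,1:] + smult z f) + smult (-\<beta>*z) (pcompose f [:l,1:])
   = (Mact 1 \<beta> l x + smult z (pcompose f [:l,1:])) * [:0,1:] + smult 0 f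
     + smult l (Mact 1 \<beta> l x + smult z (pcompose f [:l,1:]))"
proof -
  obtain X where X: "[:0,1::complex:] = X" by blast
  show ?thesis unfolding Mact_def pcompose_add pcompose_mult pcompose_smult pcomp_X
    unfolding ring_conv pc_lin_gen[OF X] pc_lin_gen2[OF X] by algebra
qed

lemma EL_br: "Mact 1 \<beta> l (Mact 1 \<beta> m x + smult z (pcompose f [:m,1:])) + smult 0 (pcompose f [:l,1:])
   - (Mact 1 \<beta> m (Mact 1 \<beta> l x + smult z (pcompose f [:l,1:])) + smult 0 (pcompose f [:m,1:]))
   = smult (l - m) (Mact 1 \<beta> (l+m) x + smult z (pcompose f [:l+m,1:]))"
proof -
  obtain X where X: "[:0,1::complex:] = X" by blast
  show ?thesis unfolding Mact_add Mact_smult MM MM[of \<beta> m l] MG MG[where l=m and m=l] add.commute[of m l]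
    unfolding Mact_def ring_conv pc_lin_gen[OF X] pc_lin_gen2[OF X] by algebra
qed

context
  fixes \<beta> :: complex and f :: "complex poly"
begin

abbreviation "E0 \<equiv> Ecoc 1 \<beta> (-\<beta>) (f, \<lambda>l. pcompose f [:l,1:], \<lambda>l. 0)"

lemma sclE: "scl E0 c (x, z) = (smult c x, c * z)" by (simp add: Ecoc_def)
lemma ddE: "dd E0 (x, z) = (x * [:0,1:] + smult z f, -\<beta> * z)" by (simp add: Ecoc_def)
lemma LE: "actL E0 l (x, z) = (Mact 1 \<beta> l x + smult z (pcompose f [:l,1:]), 0)" by (simp add: Ecoc_def)
lemma WE: "actW E0 l v = 0" by (cases v) (simp add: Ecoc_def zero_prod_def)

lemma Ecoc_W: "is_Wmod a b E0"
  unfolding is_Wmod_def lin_def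
proof (intro conjI allI)
  show "vector_space (scl E0)" by (simp add: Ecoc_def vs_pair)
next
  fix x y :: "complex poly \<times> complex"
  show "dd E0 (x + y) = dd E0 x + dd E0 y"
    by (cases x, cases y) (simp add: ddE algebra_simps smult_add_left)
next
  fix c and x :: "complex poly \<times> complex"
  show "dd E0 (scl E0 c x) = scl E0 c (dd E0 x)"
    by (cases x) (simp add: ddE sclE smult_add_right mult_smult_left)
next
  fix l and x y :: "complex poly \<times> complex"
  show "actL E0 l (x + y) = actL E0 l x + actL E0 l y"
    by (cases x, cases y) (simp add: LE Mact_add smult_add_left)
next
  fix l c and x :: "complex poly \<times> complex"
  show "actL E0 l (scl E0 c x) = scl E0 c (actL E0 l x)"
    by (cases x) (simp add: LE sclE Mact_smult smult_add_right)
next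
  fix l and x y :: "complex poly \<times> complex"
  show "actW E0 l (x + y) = actW E0 l x + actW E0 l y" by (simp add: WE)
next
  fix l c and x :: "complex poly \<times> complex"
  show "actW E0 l (scl E0 c x) = scl E0 c (actW E0 l x)"
    by (simp add: WE zero_prod_def sclE)
next
  fix v :: "complex poly \<times> complex"
  show "is_polyfun (scl E0) (\<lambda>l. actL E0 l v)"
  proof (cases v)
    case (Pair x z)
    have "is_polyfun (\<lambda>c (x, z). (smult c x, c * z)) (\<lambda>l. (Mact 1 \<beta> l x + smult z (pcompose f [:l,1:]), 0::complex))"
      by (intro pf_pair pf_add pf_Mact pf_smultc pf_pcomp)
    then show ?thesis by (simp add: Pair LE Ecoc_def)
  qed
next
  fix v :: "complex poly \<times> complex"
  show "is_polyfun (scl E0) (\<lambda>l. actW E0 l v)"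
    using pf_pair[OF pf_const[of 0]] by (simp add: WE Ecoc_def zero_prod_def)
next
  fix l and v :: "complex poly \<times> complex"
  show "actL E0 l (dd E0 v) = dd E0 (actL E0 l v) + scl E0 l (actL E0 l v)"
  proof (cases v)
    case (Pair x z)
    show ?thesis unfolding Pair ddE LE sclE add_Pair prod.inject
      using EL_dd[of \<beta> l x z f] by simp
  qed
next
  fix l and v :: "complex poly \<times> complex"
  show "actW E0 l (dd E0 v) = dd E0 (actW E0 l v) + scl E0 l (actW E0 l v)"
    by (simp add: WE zero_prod_def ddE sclE)
next
  fix l m and v :: "complex poly \<times> complex"
  show "actL E0 l (actL E0 m v) - actL E0 m (actL E0 l v) = scl E0 (l - m) (actL E0 (l + m) v)"
  proof (cases v)
    case (Pair x z)
    show ?thesis unfolding Pair LE sclE diff_Pair prod.inject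
      using EL_br[of \<beta> l m x z f] by simp
  qed
next
  fix l m and v :: "complex poly \<times> complex"
  show "actL E0 l (actW E0 m v) - actW E0 m (actL E0 l v) = scl E0 (- (l + m) + a * l + b) (actW E0 (l + m) v)"
    by (simp add: WE zero_prod_def LE sclE)
next
  fix l m and v :: "complex poly \<times> complex"
  show "actW E0 l (actW E0 m v) - actW E0 m (actW E0 l v) = 0"
    by (simp add: WE)
qed

lemma Ecoc_ext: "is_ext a b (Mab 1 \<beta>) (Cc (-\<beta>)) E0 incl snd"
  unfolding is_ext_def
proof (intro conjI)
  show "is_Wmod a b (Mab 1 \<beta>)" by (rule Mab_W)
  show "is_Wmod a b (Cc (-\<beta>))" by (rule Cc_W)
  show "is_Wmod a b E0" by (rule Ecoc_W)
  show "is_hom (Mab 1 \<beta>) E0 incl"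
    by (simp add: is_hom_def lin_def incl_def Mab_def ddE LE WE zero_prod_def sclE)
  show "is_hom E0 (Cc (-\<beta>)) snd"
    unfolding is_hom_def lin_def
    by (auto simp: Cc_def ddE LE WE sclE split: prod.splits)
  show "inj incl" by (simp add: inj_def incl_def)
  show "surj snd" by (metis snd_conv surjI)
  show "range incl = {x. snd x = 0}"
    by (auto simp: incl_def image_def intro: prod_eqI)
qed

end


definition CC :: "complex poly \<Rightarrow> cocyc" where
  "CC f = (f, \<lambda>l. pcompose f [:l,1:], \<lambda>l. 0)"

lemma E0_ctx: "ectx a b 1 \<beta> (-\<beta>) (Ecoc 1 \<beta> (-\<beta>) (CC f)) incl snd (0,1)"
  unfolding CC_def by unfold_locales (rule Ecoc_ext, simp)

lemma E0_ff:
  assumes "is_ext a b (Mab 1 \<beta>) (Cc (-\<beta>)) (Ecoc 1 \<beta> (-\<beta>) (f, g, h)) incl snd"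
  shows "ectx.ff (-\<beta>) (Ecoc 1 \<beta> (-\<beta>) (f, g, h)) incl (0,1) = f \<and> (\<forall>l. h l = 0)
         \<and> (\<forall>l. g l = pcompose f [:l,1:])"
proof -
  interpret T: ectx a b 1 \<beta> "-\<beta>" "Ecoc 1 \<beta> (-\<beta>) (f, g, h)" incl snd "(0,1)"
    by unfold_locales (rule assms, simp)
  have "incl T.ff = (f, 0)" using T.i_ff by (simp add: Ecoc_def)
  then have ff: "T.ff = f" by (simp add: incl_def)
  have "incl (T.gg l) = (g l, 0)" for l using T.i_gg[of l] by (simp add: Ecoc_def)
  then have gg: "T.gg l = g l" for l by (simp add: incl_def)
  have "incl (T.hh l) = (h l, 0)" for l using T.i_hh[of l] by (simp add: Ecoc_def)
  then have hh: "T.hh l = h l" for l by (simp add: incl_def)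
  have "\<forall>l. h l = 0" using T.hh0 hh by simp
  moreover have "\<forall>l. g l = pcompose f [:l,1:]" using T.gg1[OF refl refl] gg ff by simp
  ultimately show ?thesis using ff by simp
qed

lemma Z_iff: "t \<in> cocycles a b 1 \<beta> (-\<beta>) \<longleftrightarrow> (\<exists>f. t = CC f)"
proof
  assume "t \<in> cocycles a b 1 \<beta> (-\<beta>)"
  then have e: "is_ext a b (Mab 1 \<beta>) (Cc (-\<beta>)) (Ecoc 1 \<beta> (-\<beta>) t) incl snd"
    by (simp add: cocycles_def)
  obtain f g h where t: "t = (f, g, h)" by (cases t) auto
  from E0_ff[OF e[unfolded t]] have "h = (\<lambda>l. 0)" "g = (\<lambda>l. pcompose f [:l,1:])" by auto
  then show "\<exists>f. t = CC f" by (auto simp: t CC_def)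
next
  assume "\<exists>f. t = CC f"
  then show "t \<in> cocycles a b 1 \<beta> (-\<beta>)"
    using Ecoc_ext by (auto simp: cocycles_def CC_def)
qed

lemma triv_CC: "trivial_ext (Mab 1 \<beta>) (Cc (-\<beta>)) (Ecoc 1 \<beta> (-\<beta>) (CC f)) incl snd \<longleftrightarrow> poly f (-\<beta>) = 0"
proof -
  interpret T: ectx a b 1 \<beta> "-\<beta>" "Ecoc 1 \<beta> (-\<beta>) (CC f)" incl snd "(0,1)"
    by (rule E0_ctx)
  have ff: "T.ff = f"
    using E0_ff[OF Ecoc_ext[of a b \<beta> f]] unfolding CC_def by simp
  show ?thesis using T.triv_imp T.triv_if unfolding ff by blast
qed

lemma B_iff: "t \<in> coboundaries a b 1 \<beta> (-\<beta>) \<longleftrightarrow> (\<exists>f. t = CC f \<and> poly f (-\<beta>) = 0)"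
  unfolding coboundaries_def using Z_iff[of t a b \<beta>] triv_CC by auto

lemma CC_0: "(0, \<lambda>l. 0, \<lambda>l. 0) = CC 0" by (simp add: CC_def)
lemma CC_add: "cadd (CC f) (CC g) = CC (f + g)" by (simp add: CC_def cadd_def pcompose_add)
lemma CC_scale: "cscale c (CC f) = CC (smult c f)" by (simp add: CC_def cscale_def pcompose_smult)
lemma CC_inj: "CC f = CC g \<longleftrightarrow> f = g" by (auto simp: CC_def)

lemma qd1: "quot_dim_one (cocycles a b 1 \<beta> (-\<beta>)) (coboundaries a b 1 \<beta> (-\<beta>))"
  unfolding quot_dim_one_def csubspace_def
proof (intro conjI ballI allI)
  show "(0, \<lambda>l. 0, \<lambda>l. 0) \<in> cocycles a b 1 \<beta> (-\<beta>)" unfolding CC_0 Z_iff by blast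
  show "(0, \<lambda>l. 0, \<lambda>l. 0) \<in> coboundaries a b 1 \<beta> (-\<beta>)" unfolding CC_0 B_iff by auto
  fix t u assume "t \<in> cocycles a b 1 \<beta> (-\<beta>)" "u \<in> cocycles a b 1 \<beta> (-\<beta>)"
  then show "cadd t u \<in> cocycles a b 1 \<beta> (-\<beta>)" unfolding Z_iff by (auto simp: CC_add)
next
  fix c t assume "t \<in> cocycles a b 1 \<beta> (-\<beta>)"
  then show "cscale c t \<in> cocycles a b 1 \<beta> (-\<beta>)" unfolding Z_iff by (auto simp: CC_scale)
next
  fix t u assume "t \<in> coboundaries a b 1 \<beta> (-\<beta>)" "u \<in> coboundaries a b 1 \<beta> (-\<beta>)"
  then show "cadd t u \<in> coboundaries a b 1 \<beta> (-\<beta>)" unfolding B_iff by (auto simp: CC_add)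
next
  fix c t assume "t \<in> coboundaries a b 1 \<beta> (-\<beta>)"
  then show "cscale c t \<in> coboundaries a b 1 \<beta> (-\<beta>)" unfolding B_iff by (auto simp: CC_scale)
next
  show "coboundaries a b 1 \<beta> (-\<beta>) \<subseteq> cocycles a b 1 \<beta> (-\<beta>)"
    by (auto simp: coboundaries_def)
next
  show "\<exists>z\<in>cocycles a b 1 \<beta> (-\<beta>). z \<notin> coboundaries a b 1 \<beta> (-\<beta>) \<and>
          (\<forall>x\<in>cocycles a b 1 \<beta> (-\<beta>). \<exists>c. cadd x (cscale (- c) z) \<in> coboundaries a b 1 \<beta> (-\<beta>))"
  proof (intro bexI[of _ "CC 1"] conjI ballI)
    show "CC 1 \<in> cocycles a b 1 \<beta> (-\<beta>)" unfolding Z_iff by blast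
    show "CC 1 \<notin> coboundaries a b 1 \<beta> (-\<beta>)" unfolding B_iff CC_inj by auto
    fix x assume "x \<in> cocycles a b 1 \<beta> (-\<beta>)"
    then obtain f where x: "x = CC f" unfolding Z_iff by blast
    show "\<exists>c. cadd x (cscale (- c) (CC 1)) \<in> coboundaries a b 1 \<beta> (-\<beta>)"
      by (rule exI[of _ "poly f (-\<beta>)"]) (auto simp: x CC_add CC_scale B_iff)
  qed
qed



lemma get_c0: assumes "is_ext a b V (Cc \<eta>) E i p" obtains c0 where "p c0 = 1"
  using assms unfolding is_ext_def by (metis surjD)

theorem theorem3p5:
  fixes a b \<alpha> \<beta> \<eta> :: complex
  assumes "(a, b) \<noteq> (1, 0)" and "\<alpha> \<noteq> 0"
  shows "(\<forall>(E :: ('e::ab_group_add) cmod) i p.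
            nontrivial_ext a b (Mab \<alpha> \<beta>) (Cc \<eta>) E i p \<longrightarrow> \<beta> + \<eta> = 0 \<and> \<alpha> = 1)
       \<and> (\<beta> + \<eta> = 0 \<and> \<alpha> = 1 \<longrightarrow>
            (\<exists>(E :: (complex poly \<times> complex) cmod) i p.
               nontrivial_ext a b (Mab \<alpha> \<beta>) (Cc \<eta>) E i p))
       \<and> (\<beta> + \<eta> = 0 \<and> \<alpha> = 1 \<longrightarrow>
            quot_dim_one (cocycles a b 1 \<beta> (- \<beta>)) (coboundaries a b 1 \<beta> (- \<beta>))
          \<and> (\<forall>(E :: 'e cmod) i p. nontrivial_ext a b (Mab \<alpha> \<beta>) (Cc \<eta>) E i p \<longrightarrow>
               (\<exists>k. k \<noteq> 0 \<and> is_ext a b (Mab \<alpha> \<beta>) (Cc \<eta>) (Ek \<alpha> \<beta> \<eta> k) incl snd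
                    \<and> ext_equiv (Ek \<alpha> \<beta> \<eta> k) incl snd E i p)))"
proof (intro conjI impI allI)
  fix E :: "'e cmod" and i p
  assume nt: "nontrivial_ext a b (Mab \<alpha> \<beta>) (Cc \<eta>) E i p"
  then have e: "is_ext a b (Mab \<alpha> \<beta>) (Cc \<eta>) E i p" and ntr: "\<not> trivial_ext (Mab \<alpha> \<beta>) (Cc \<eta>) E i p"
    by (auto simp: nontrivial_ext_def)
  obtain c0 where c0: "p c0 = 1" using get_c0[OF e] .
  interpret T: ectx a b \<alpha> \<beta> \<eta> E i p c0 by unfold_locales (rule e, rule c0)
  have f0: "poly T.ff \<eta> \<noteq> 0" using T.triv_if ntr by blast
  have 1: "poly T.ff \<eta> * (\<beta> + \<eta>) = 0" using T.feta[of 0] by simp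
  have 2: "poly T.ff \<eta> * (\<alpha> + \<beta> + \<eta> - 1) = 0" using T.feta[of 1] by simp
  from 1 2 f0 show "\<beta> + \<eta> = 0" by simp
  from 1 2 f0 show "\<alpha> = 1" by (simp add: algebra_simps)
next
  assume h: "\<beta> + \<eta> = 0 \<and> \<alpha> = 1"
  then have a1: "\<alpha> = 1" and eb: "\<eta> = - \<beta>" by (auto simp: eq_neg_iff_add_eq_0 add.commute)
  have "is_ext a b (Mab 1 \<beta>) (Cc (-\<beta>)) (Ecoc 1 \<beta> (-\<beta>) (CC 1)) incl snd"
    unfolding CC_def by (rule Ecoc_ext)
  moreover have "\<not> trivial_ext (Mab 1 \<beta>) (Cc (-\<beta>)) (Ecoc 1 \<beta> (-\<beta>) (CC 1)) incl snd"
    using triv_CC[of \<beta> 1] by simp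
  ultimately show "\<exists>(E :: (complex poly \<times> complex) cmod) i p. nontrivial_ext a b (Mab \<alpha> \<beta>) (Cc \<eta>) E i p"
    unfolding a1 eb nontrivial_ext_def by blast
next
  assume h: "\<beta> + \<eta> = 0 \<and> \<alpha> = 1"
  show "quot_dim_one (cocycles a b 1 \<beta> (- \<beta>)) (coboundaries a b 1 \<beta> (- \<beta>))" by (rule qd1)
next
  fix E :: "'e cmod" and i p
  assume h: "\<beta> + \<eta> = 0 \<and> \<alpha> = 1"
  then have a1: "\<alpha> = 1" and eb: "\<eta> = - \<beta>" by (auto simp: eq_neg_iff_add_eq_0 add.commute)
  assume nt: "nontrivial_ext a b (Mab \<alpha> \<beta>) (Cc \<eta>) E i p"
  then have e: "is_ext a b (Mab \<alpha> \<beta>) (Cc \<eta>) E i p" and ntr: "\<not> trivial_ext (Mab \<alpha> \<beta>) (Cc \<eta>) E i p"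
    by (auto simp: nontrivial_ext_def)
  obtain c0 where c0: "p c0 = 1" using get_c0[OF e] .
  interpret T: ectx a b \<alpha> \<beta> \<eta> E i p c0 by unfold_locales (rule e, rule c0)
  have f0: "poly T.ff \<eta> \<noteq> 0" using T.triv_if ntr by blast
  have ek: "Ek \<alpha> \<beta> \<eta> k = Ecoc 1 \<beta> (-\<beta>) (CC [:k:])" for k
    by (simp add: Ek_def CC_def a1 eb)
  have ext: "is_ext a b (Mab \<alpha> \<beta>) (Cc \<eta>) (Ek \<alpha> \<beta> \<eta> k) incl snd" for k
  proof -
    have "is_ext a b (Mab 1 \<beta>) (Cc (-\<beta>)) (Ecoc 1 \<beta> (-\<beta>) (CC [:k:])) incl snd"
      unfolding CC_def by (rule Ecoc_ext)
    then show ?thesis unfolding ek unfolding a1 eb .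
  qed
  show "\<exists>k. k \<noteq> 0 \<and> is_ext a b (Mab \<alpha> \<beta>) (Cc \<eta>) (Ek \<alpha> \<beta> \<eta> k) incl snd
                    \<and> ext_equiv (Ek \<alpha> \<beta> \<eta> k) incl snd E i p"
    using f0 ext T.equiv_Ek[OF a1 eb] by blast
qed


end
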